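(* Let $Q=(G\leftleftarrows A)$ be a group-like graph which is path-connected (as an undirected graph). Then $\phi(I^n(A))=I^{n+1}(G)$ for all $n\ge 0$, where $\phi:\mathbf k[A]\to\mathbf k[G]$ is $\phi(a)=t(a)-s(a)$.
   Context: A group-like graph is a directed graph $(G\overset{s}{\underset{t}{\leftleftarrows}}A)$ with an associative multiplication morphism from its Cartesian square to itself making $G$ a group; it gives a two-sided action of $G$ on $A$ with $s,t$ equivariant ($s(g\cdot a\cdot h)=gs(a)h$, similarly for $t$). $\mathbf k$ is a field of characteristic $0$, $\mathbf k[G]$ the group algebra, $\mathbf k[A]$ the vector space with basis $A$ with the induced $\mathbf k[G]$-bimodule structure. $I(G)$ is the augmentation ideal of $\mathbf k[G]$, $I^0(G)=\mathbf k[G]$, and $I^n(A)\subseteq\mathbf k[A]$ is the span of all $v_1\cdot a\cdot v_2$ with $a\in A$, $v_1\in I^k(G)$, $v_2\in I^{n-k}(G)$, $0\le k\le n$. *)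

theory Defs
  imports "HOL-Algebra.Group"
begin

text \<open>Group algebra k[G] and k[A] as finitely supported functions.\<close>

definition supp :: "('x \<Rightarrow> 'k::zero) \<Rightarrow> 'x set" where
  "supp f = {x. f x \<noteq> 0}"

definition fsfun :: "'x set \<Rightarrow> ('x \<Rightarrow> 'k::zero) set" where
  "fsfun X = {f. finite (supp f) \<and> supp f \<subseteq> X}"

definition kspan :: "('x \<Rightarrow> 'k::field) set \<Rightarrow> ('x \<Rightarrow> 'k) set" where
  "kspan S = \<Inter> {V. (\<lambda>_. 0) \<in> V \<and> S \<subseteq> V
                 \<and> (\<forall>f\<in>V. \<forall>g\<in>V. (\<lambda>x. f x + g x) \<in> V)
                 \<and> (\<forall>c. \<forall>f\<in>V. (\<lambda>x. c * f x) \<in> V)}"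

definition delta :: "'x \<Rightarrow> 'x \<Rightarrow> 'k::zero_neq_one" where
  "delta y = (\<lambda>x. if x = y then 1 else 0)"

definition conv :: "('g, 'b) monoid_scheme \<Rightarrow> ('g \<Rightarrow> 'k::field) \<Rightarrow> ('g \<Rightarrow> 'k) \<Rightarrow> 'g \<Rightarrow> 'k" where
  "conv G u v = (\<lambda>x. \<Sum>p\<in>supp u \<times> supp v.
       if fst p \<otimes>\<^bsub>G\<^esub> snd p = x then u (fst p) * v (snd p) else 0)"

definition augmentation :: "('g \<Rightarrow> 'k::field) \<Rightarrow> 'k" where
  "augmentation u = (\<Sum>x\<in>supp u. u x)"

definition aug_ideal :: "('g, 'b) monoid_scheme \<Rightarrow> ('g \<Rightarrow> 'k::field) set" where
  "aug_ideal G = {u \<in> fsfun (carrier G). augmentation u = 0}"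

fun aug_pow :: "('g, 'b) monoid_scheme \<Rightarrow> nat \<Rightarrow> ('g \<Rightarrow> 'k::field) set" where
  "aug_pow G 0 = fsfun (carrier G)"
| "aug_pow G (Suc n) = kspan {conv G u v | u v. u \<in> aug_ideal G \<and> v \<in> aug_pow G n}"

text \<open>Bimodule action on k[A]: v1 \<cdot> a \<cdot> v2, for the basis element a.\<close>
definition bimod_act :: "('g \<Rightarrow> 'a \<Rightarrow> 'a) \<Rightarrow> ('a \<Rightarrow> 'g \<Rightarrow> 'a)
     \<Rightarrow> ('g \<Rightarrow> 'k::field) \<Rightarrow> 'a \<Rightarrow> ('g \<Rightarrow> 'k) \<Rightarrow> 'a \<Rightarrow> 'k" where
  "bimod_act l r v1 a v2 = (\<lambda>b. \<Sum>p\<in>supp v1 \<times> supp v2.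
       if l (fst p) (r a (snd p)) = b then v1 (fst p) * v2 (snd p) else 0)"

definition aug_pow_A :: "('g, 'b) monoid_scheme \<Rightarrow> 'a set \<Rightarrow> ('g \<Rightarrow> 'a \<Rightarrow> 'a)
     \<Rightarrow> ('a \<Rightarrow> 'g \<Rightarrow> 'a) \<Rightarrow> nat \<Rightarrow> ('a \<Rightarrow> 'k::field) set" where
  "aug_pow_A G A l r n = kspan {bimod_act l r v1 a v2 | v1 a v2 k.
       a \<in> A \<and> k \<le> n \<and> v1 \<in> aug_pow G k \<and> v2 \<in> aug_pow G (n - k)}"

definition phi_map :: "('a \<Rightarrow> 'g) \<Rightarrow> ('a \<Rightarrow> 'g) \<Rightarrow> ('a \<Rightarrow> 'k::field) \<Rightarrow> 'g \<Rightarrow> 'k" where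
  "phi_map s t f = (\<lambda>x. \<Sum>a\<in>supp f. f a * (delta (t a) x - delta (s a) x))"

definition group_like_graph :: "('g, 'b) monoid_scheme \<Rightarrow> 'a set \<Rightarrow> ('a \<Rightarrow> 'g) \<Rightarrow> ('a \<Rightarrow> 'g)
     \<Rightarrow> ('g \<Rightarrow> 'a \<Rightarrow> 'a) \<Rightarrow> ('a \<Rightarrow> 'g \<Rightarrow> 'a) \<Rightarrow> bool" where
  "group_like_graph G A s t l r \<longleftrightarrow> group G
    \<and> (\<forall>a\<in>A. s a \<in> carrier G \<and> t a \<in> carrier G)
    \<and> (\<forall>g\<in>carrier G. \<forall>a\<in>A. l g a \<in> A \<and> r a g \<in> A)
    \<and> (\<forall>g\<in>carrier G. \<forall>h\<in>carrier G. \<forall>a\<in>A. l (g \<otimes>\<^bsub>G\<^esub> h) a = l g (l h a))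
    \<and> (\<forall>g\<in>carrier G. \<forall>h\<in>carrier G. \<forall>a\<in>A. r a (g \<otimes>\<^bsub>G\<^esub> h) = r (r a g) h)
    \<and> (\<forall>g\<in>carrier G. \<forall>h\<in>carrier G. \<forall>a\<in>A. l g (r a h) = r (l g a) h)
    \<and> (\<forall>a\<in>A. l \<one>\<^bsub>G\<^esub> a = a \<and> r a \<one>\<^bsub>G\<^esub> = a)
    \<and> (\<forall>g\<in>carrier G. \<forall>h\<in>carrier G. \<forall>a\<in>A.
         s (l g (r a h)) = g \<otimes>\<^bsub>G\<^esub> s a \<otimes>\<^bsub>G\<^esub> h
       \<and> t (l g (r a h)) = g \<otimes>\<^bsub>G\<^esub> t a \<otimes>\<^bsub>G\<^esub> h)"

definition path_connected_graph :: "'g set \<Rightarrow> 'a set \<Rightarrow> ('a \<Rightarrow> 'g) \<Rightarrow> ('a \<Rightarrow> 'g) \<Rightarrow> bool" where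
  "path_connected_graph V A s t \<longleftrightarrow>
    (\<forall>x\<in>V. \<forall>y\<in>V. (\<lambda>u v. \<exists>a\<in>A. (s a = u \<and> t a = v) \<or> (s a = v \<and> t a = u))\<^sup>*\<^sup>* x y)"

end

theory Submission
  imports Defs
begin

definition subsp :: "('x \<Rightarrow> 'k::field) set \<Rightarrow> bool" where
  "subsp V \<longleftrightarrow> (\<lambda>_. 0) \<in> V \<and> (\<forall>f\<in>V. \<forall>g\<in>V. (\<lambda>x. f x + g x) \<in> V)
     \<and> (\<forall>c. \<forall>f\<in>V. (\<lambda>x. c * f x) \<in> V)"

lemma kspan_least: "subsp V \<Longrightarrow> S \<subseteq> V \<Longrightarrow> kspan S \<subseteq> V"
  unfolding kspan_def subsp_def by blast

lemma kspan_subsp: "subsp (kspan S)"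
  unfolding kspan_def subsp_def by auto

lemma kspan_base: "S \<subseteq> kspan S"
  unfolding kspan_def by blast

lemma subsp_zero: "subsp V \<Longrightarrow> (\<lambda>_. 0) \<in> V" unfolding subsp_def by blast
lemma subsp_add: "subsp V \<Longrightarrow> f \<in> V \<Longrightarrow> g \<in> V \<Longrightarrow> (\<lambda>x. f x + g x) \<in> V"
  unfolding subsp_def by blast
lemma subsp_smult: "subsp V \<Longrightarrow> f \<in> V \<Longrightarrow> (\<lambda>x. c * f x) \<in> V"
  unfolding subsp_def by blast
lemma subsp_diff: assumes "subsp V" "f \<in> V" "g \<in> V" shows "(\<lambda>x. f x - g x) \<in> V"
proof -
  have "(\<lambda>x. (-1) * g x) \<in> V" using assms subsp_smult by blast
  from subsp_add[OF assms(1,2) this] show ?thesis by simp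
qed

lemma subsp_sum: assumes "subsp V" "finite S" "\<forall>i\<in>S. f i \<in> V"
  shows "(\<lambda>x. \<Sum>i\<in>S. c i * f i x) \<in> V"
  using assms(2,3)
proof (induction S rule: finite_induct)
  case empty then show ?case using subsp_zero[OF assms(1)] by simp
next
  case (insert a S)
  have "(\<lambda>x. c a * f a x) \<in> V" using insert subsp_smult[OF assms(1)] by blast
  from subsp_add[OF assms(1) this] insert show ?case by simp
qed

lemma kspan_induct: assumes "x \<in> kspan S" "P (\<lambda>_. 0)" "\<And>s. s \<in> S \<Longrightarrow> P s"
  "\<And>f g. P f \<Longrightarrow> P g \<Longrightarrow> P (\<lambda>x. f x + g x)" "\<And>c f. P f \<Longrightarrow> P (\<lambda>x. c * f x)"
  shows "P x"
proof -
  have "subsp (Collect P)" using assms unfolding subsp_def by auto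
  with kspan_least[of "Collect P" S] assms show ?thesis by auto
qed

lemma supp_add: "supp (\<lambda>x. f x + g x :: 'k::monoid_add) \<subseteq> supp f \<union> supp g"
  unfolding supp_def by auto
lemma supp_smult: "supp (\<lambda>x. c * f x :: 'k::mult_zero) \<subseteq> supp f"
  unfolding supp_def by auto

lemma fsfun_subsp: "subsp (fsfun X :: ('x \<Rightarrow> 'k::field) set)"
proof -
  have z: "(\<lambda>_. 0::'k) \<in> fsfun X" by (auto simp: fsfun_def supp_def)
  have a: "(\<lambda>x. f x + g x) \<in> fsfun X" if "f \<in> fsfun X" "g \<in> fsfun X" for f g :: "'x \<Rightarrow> 'k"
    using that supp_add[of f g] unfolding fsfun_def
    by (auto intro: finite_subset[of _ "supp f \<union> supp g"])
  have m: "(\<lambda>x. c * f x) \<in> fsfun X" if "f \<in> fsfun X" for f :: "'x \<Rightarrow> 'k" and c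
    using that supp_smult[of c f] unfolding fsfun_def
    by (auto intro: finite_subset)
  show ?thesis unfolding subsp_def using z a m by blast
qed

lemma supp_delta: "supp (delta y :: 'x \<Rightarrow> 'k::zero_neq_one) = {y}"
  unfolding supp_def delta_def by auto

lemma delta_apply: "delta y x = (if x = y then 1 else 0)" by (simp add: delta_def)

lemma delta_fsfun: "y \<in> X \<Longrightarrow> (delta y :: 'x \<Rightarrow> 'k::field) \<in> fsfun X"
  unfolding fsfun_def by (simp add: supp_delta)

lemma lincomb: fixes f :: "'x \<Rightarrow> 'k::field"
  assumes "finite S" "supp f \<subseteq> S"
  shows "f = (\<lambda>x. \<Sum>a\<in>S. f a * delta a x)"
proof
  fix x
  have "(\<Sum>a\<in>S. f a * delta a x) = (\<Sum>a\<in>S. if a = x then f a else 0)"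
    by (rule sum.cong) (auto simp: delta_def)
  also have "\<dots> = f x" using assms by (auto simp: sum.delta' supp_def)
  finally show "f x = (\<Sum>a\<in>S. f a * delta a x)" by simp
qed


lemma sum_supp_to: fixes f :: "'x \<Rightarrow> 'k::field"
  assumes "finite U" "supp f \<subseteq> U" "\<And>x. f x = 0 \<Longrightarrow> h x = 0"
  shows "(\<Sum>x\<in>supp f. h x) = (\<Sum>x\<in>U. h x)"
  using assms by (intro sum.mono_neutral_left) (auto simp: supp_def)

lemma conv_eq:
  fixes u v :: "'g \<Rightarrow> 'k::field"
  assumes "finite U" "finite V" "supp u \<subseteq> U" "supp v \<subseteq> V"
  shows "conv G u v x = (\<Sum>g\<in>U. \<Sum>h\<in>V. if g \<otimes>\<^bsub>G\<^esub> h = x then u g * v h else 0)"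
proof -
  have "conv G u v x = (\<Sum>p\<in>U \<times> V. if fst p \<otimes>\<^bsub>G\<^esub> snd p = x then u (fst p) * v (snd p) else 0)"
    unfolding conv_def using assms
    by (intro sum.mono_neutral_left) (auto simp: supp_def)
  then show ?thesis by (simp add: sum.cartesian_product split_def)
qed

lemma bimod_eq:
  fixes v1 v2 :: "'g \<Rightarrow> 'k::field"
  assumes "finite U" "finite V" "supp v1 \<subseteq> U" "supp v2 \<subseteq> V"
  shows "bimod_act l r v1 a v2 b = (\<Sum>g\<in>U. \<Sum>h\<in>V. if l g (r a h) = b then v1 g * v2 h else 0)"
proof -
  have "bimod_act l r v1 a v2 b = (\<Sum>p\<in>U \<times> V. if l (fst p) (r a (snd p)) = b then v1 (fst p) * v2 (snd p) else 0)"
    unfolding bimod_act_def using assms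
    by (intro sum.mono_neutral_left) (auto simp: supp_def)
  then show ?thesis by (simp add: sum.cartesian_product split_def)
qed

lemma phi_eq:
  fixes f :: "'a \<Rightarrow> 'k::field"
  assumes "finite B" "supp f \<subseteq> B"
  shows "phi_map s t f x = (\<Sum>a\<in>B. f a * (delta (t a) x - delta (s a) x))"
  unfolding phi_map_def using assms by (intro sum_supp_to) auto

lemma aug_eq:
  fixes f :: "'a \<Rightarrow> 'k::field"
  assumes "finite B" "supp f \<subseteq> B"
  shows "augmentation f = (\<Sum>a\<in>B. f a)"
  unfolding augmentation_def using assms by (intro sum_supp_to) auto

lemma conv_supp: "supp (conv G u v) \<subseteq> (\<lambda>p. fst p \<otimes>\<^bsub>G\<^esub> snd p) ` (supp u \<times> supp v)"
proof
  fix x assume "x \<in> supp (conv G u v)"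
  then have "conv G u v x \<noteq> 0" by (simp add: supp_def)
  then obtain p where "p \<in> supp u \<times> supp v" "fst p \<otimes>\<^bsub>G\<^esub> snd p = x"
    unfolding conv_def by (smt (verit) sum.neutral)
  then show "x \<in> (\<lambda>p. fst p \<otimes>\<^bsub>G\<^esub> snd p) ` (supp u \<times> supp v)" by force
qed

lemma conv_fsfun: assumes "monoid G" "u \<in> fsfun (carrier G)" "v \<in> fsfun (carrier G)"
  shows "conv G u v \<in> fsfun (carrier G)"
proof -
  have "finite ((\<lambda>p. fst p \<otimes>\<^bsub>G\<^esub> snd p) ` (supp u \<times> supp v))"
    using assms by (auto simp: fsfun_def)
  moreover have "(\<lambda>p. fst p \<otimes>\<^bsub>G\<^esub> snd p) ` (supp u \<times> supp v) \<subseteq> carrier G"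
    using assms(2,3) monoid.m_closed[OF assms(1)] by (fastforce simp: fsfun_def)
  ultimately show ?thesis using conv_supp[of G u v] unfolding fsfun_def
    by (auto intro: finite_subset)
qed

lemma conv_add_left:
  fixes u u' v :: "'g \<Rightarrow> 'k::field"
  assumes "finite (supp u)" "finite (supp u')" "finite (supp v)"
  shows "conv G (\<lambda>x. u x + u' x) v = (\<lambda>x. conv G u v x + conv G u' v x)"
proof
  fix x
  let ?U = "supp u \<union> supp u'"
  have "supp (\<lambda>x. u x + u' x) \<subseteq> ?U" by (rule supp_add)
  then have "conv G (\<lambda>x. u x + u' x) v x = (\<Sum>g\<in>?U. \<Sum>h\<in>supp v. if g \<otimes>\<^bsub>G\<^esub> h = x then (u g + u' g) * v h else 0)"
    using assms by (intro conv_eq) auto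
  also have "\<dots> = (\<Sum>g\<in>?U. \<Sum>h\<in>supp v. if g \<otimes>\<^bsub>G\<^esub> h = x then u g * v h else 0)
     + (\<Sum>g\<in>?U. \<Sum>h\<in>supp v. if g \<otimes>\<^bsub>G\<^esub> h = x then u' g * v h else 0)"
    by (simp add: sum.distrib[symmetric] distrib_right if_distrib cong: if_cong)
  also have "\<dots> = conv G u v x + conv G u' v x"
    using assms by (simp add: conv_eq[of ?U "supp v"])
  finally show "conv G (\<lambda>x. u x + u' x) v x = conv G u v x + conv G u' v x" .
qed

lemma conv_add_right:
  fixes u v v' :: "'g \<Rightarrow> 'k::field"
  assumes "finite (supp u)" "finite (supp v)" "finite (supp v')"
  shows "conv G u (\<lambda>x. v x + v' x) = (\<lambda>x. conv G u v x + conv G u v' x)"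
proof
  fix x
  let ?V = "supp v \<union> supp v'"
  have "supp (\<lambda>x. v x + v' x) \<subseteq> ?V" by (rule supp_add)
  then have "conv G u (\<lambda>x. v x + v' x) x = (\<Sum>g\<in>supp u. \<Sum>h\<in>?V. if g \<otimes>\<^bsub>G\<^esub> h = x then u g * (v h + v' h) else 0)"
    using assms by (intro conv_eq) auto
  also have "\<dots> = (\<Sum>g\<in>supp u. \<Sum>h\<in>?V. if g \<otimes>\<^bsub>G\<^esub> h = x then u g * v h else 0)
     + (\<Sum>g\<in>supp u. \<Sum>h\<in>?V. if g \<otimes>\<^bsub>G\<^esub> h = x then u g * v' h else 0)"
    by (simp add: sum.distrib[symmetric] distrib_left if_distrib cong: if_cong)
  also have "\<dots> = conv G u v x + conv G u v' x"
    using assms by (simp add: conv_eq[of "supp u" ?V])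
  finally show "conv G u (\<lambda>x. v x + v' x) x = conv G u v x + conv G u v' x" .
qed

lemma conv_smult_left:
  fixes u v :: "'g \<Rightarrow> 'k::field"
  assumes "finite (supp u)" "finite (supp v)"
  shows "conv G (\<lambda>x. c * u x) v = (\<lambda>x. c * conv G u v x)"
proof
  fix x
  have "conv G (\<lambda>x. c * u x) v x = (\<Sum>g\<in>supp u. \<Sum>h\<in>supp v. if g \<otimes>\<^bsub>G\<^esub> h = x then (c * u g) * v h else 0)"
    using assms supp_smult[of c u] by (intro conv_eq) auto
  also have "\<dots> = c * conv G u v x"
    using assms by (simp add: conv_eq[of "supp u" "supp v"] sum_distrib_left if_distrib mult.assoc cong: if_cong)
  finally show "conv G (\<lambda>x. c * u x) v x = c * conv G u v x" .
qed

lemma conv_smult_right: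
  fixes u v :: "'g \<Rightarrow> 'k::field"
  assumes "finite (supp u)" "finite (supp v)"
  shows "conv G u (\<lambda>x. c * v x) = (\<lambda>x. c * conv G u v x)"
proof
  fix x
  have "conv G u (\<lambda>x. c * v x) x = (\<Sum>g\<in>supp u. \<Sum>h\<in>supp v. if g \<otimes>\<^bsub>G\<^esub> h = x then u g * (c * v h) else 0)"
    using assms supp_smult[of c v] by (intro conv_eq) auto
  also have "\<dots> = c * conv G u v x"
    using assms by (simp add: conv_eq[of "supp u" "supp v"] sum_distrib_left if_distrib mult.left_commute cong: if_cong)
  finally show "conv G u (\<lambda>x. c * v x) x = c * conv G u v x" .
qed


lemma if_mult0: "(if P then a else 0) * b = (if P then a * b else (0::'k::mult_zero))" by simp
lemma mult_if0: "b * (if P then a else 0) = (if P then b * a else (0::'k::mult_zero))" by simp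

lemma if_conj0: "(if A \<and> B then X else 0) = (if A then (if B then X else 0) else (0::'k::zero))" by simp

lemma reorder4: "(\<Sum>p\<in>P. \<Sum>k\<in>K. \<Sum>g\<in>U. \<Sum>h\<in>V. F p k g h)
   = (\<Sum>g\<in>U. \<Sum>h\<in>V. \<Sum>k\<in>K. \<Sum>p\<in>P. F p k g h)"
proof -
  have "(\<Sum>p\<in>P. \<Sum>k\<in>K. \<Sum>g\<in>U. \<Sum>h\<in>V. F p k g h) = (\<Sum>k\<in>K. \<Sum>p\<in>P. \<Sum>g\<in>U. \<Sum>h\<in>V. F p k g h)"
    by (rule sum.swap)
  also have "\<dots> = (\<Sum>k\<in>K. \<Sum>g\<in>U. \<Sum>p\<in>P. \<Sum>h\<in>V. F p k g h)"
    by (rule sum.cong[OF refl], rule sum.swap)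
  also have "\<dots> = (\<Sum>k\<in>K. \<Sum>g\<in>U. \<Sum>h\<in>V. \<Sum>p\<in>P. F p k g h)"
    by (rule sum.cong[OF refl], rule sum.cong[OF refl], rule sum.swap)
  also have "\<dots> = (\<Sum>g\<in>U. \<Sum>k\<in>K. \<Sum>h\<in>V. \<Sum>p\<in>P. F p k g h)"
    by (rule sum.swap)
  also have "\<dots> = (\<Sum>g\<in>U. \<Sum>h\<in>V. \<Sum>k\<in>K. \<Sum>p\<in>P. F p k g h)"
    by (rule sum.cong[OF refl], rule sum.swap)
  finally show ?thesis .
qed

lemma reorder4b: "(\<Sum>g\<in>U. \<Sum>q\<in>Q. \<Sum>h\<in>V. \<Sum>k\<in>K. F g q h k)
   = (\<Sum>g\<in>U. \<Sum>h\<in>V. \<Sum>k\<in>K. \<Sum>q\<in>Q. F g q h k)"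
proof -
  have "(\<Sum>g\<in>U. \<Sum>q\<in>Q. \<Sum>h\<in>V. \<Sum>k\<in>K. F g q h k) = (\<Sum>g\<in>U. \<Sum>h\<in>V. \<Sum>q\<in>Q. \<Sum>k\<in>K. F g q h k)"
    by (rule sum.cong[OF refl], rule sum.swap)
  also have "\<dots> = (\<Sum>g\<in>U. \<Sum>h\<in>V. \<Sum>k\<in>K. \<Sum>q\<in>Q. F g q h k)"
    by (rule sum.cong[OF refl], rule sum.cong[OF refl], rule sum.swap)
  finally show ?thesis .
qed

lemma conv_conv_left:
  fixes u v w :: "'g \<Rightarrow> 'k::field"
  assumes "finite (supp u)" "finite (supp v)" "finite (supp w)"
  shows "conv G (conv G u v) w x = (\<Sum>g\<in>supp u. \<Sum>h\<in>supp v. \<Sum>k\<in>supp w.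
      if (g \<otimes>\<^bsub>G\<^esub> h) \<otimes>\<^bsub>G\<^esub> k = x then u g * v h * w k else 0)"
proof -
  let ?U = "supp u" and ?V = "supp v" and ?W = "supp w"
  let ?P = "(\<lambda>p. fst p \<otimes>\<^bsub>G\<^esub> snd p) ` (?U \<times> ?V)"
  have fP: "finite ?P" using assms by auto
  have "conv G (conv G u v) w x = (\<Sum>p\<in>?P. \<Sum>k\<in>?W. if p \<otimes>\<^bsub>G\<^esub> k = x then conv G u v p * w k else 0)"
    using assms fP conv_supp[of G u v] by (intro conv_eq) auto
  also have "\<dots> = (\<Sum>p\<in>?P. \<Sum>k\<in>?W. \<Sum>g\<in>?U. \<Sum>h\<in>?V.
      if g \<otimes>\<^bsub>G\<^esub> h = p \<and> p \<otimes>\<^bsub>G\<^esub> k = x then u g * v h * w k else 0)"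
  proof (intro sum.cong refl)
    fix p k
    show "(if p \<otimes>\<^bsub>G\<^esub> k = x then conv G u v p * w k else 0) = (\<Sum>g\<in>?U. \<Sum>h\<in>?V.
      if g \<otimes>\<^bsub>G\<^esub> h = p \<and> p \<otimes>\<^bsub>G\<^esub> k = x then u g * v h * w k else 0)"
      using assms by (cases "p \<otimes>\<^bsub>G\<^esub> k = x") (auto simp: conv_eq[of ?U ?V] sum_distrib_right if_mult0 intro!: sum.cong)
  qed
  also have "\<dots> = (\<Sum>g\<in>?U. \<Sum>h\<in>?V. \<Sum>k\<in>?W. \<Sum>p\<in>?P.
      if g \<otimes>\<^bsub>G\<^esub> h = p \<and> p \<otimes>\<^bsub>G\<^esub> k = x then u g * v h * w k else 0)"
    by (rule reorder4)
  also have "\<dots> = (\<Sum>g\<in>?U. \<Sum>h\<in>?V. \<Sum>k\<in>?W.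
      if (g \<otimes>\<^bsub>G\<^esub> h) \<otimes>\<^bsub>G\<^esub> k = x then u g * v h * w k else 0)"
    using fP by (intro sum.cong refl) (simp add: if_conj0 sum.delta' image_iff, force)
  finally show ?thesis .
qed

lemma conv_conv_right:
  fixes u v w :: "'g \<Rightarrow> 'k::field"
  assumes "finite (supp u)" "finite (supp v)" "finite (supp w)"
  shows "conv G u (conv G v w) x = (\<Sum>g\<in>supp u. \<Sum>h\<in>supp v. \<Sum>k\<in>supp w.
      if g \<otimes>\<^bsub>G\<^esub> (h \<otimes>\<^bsub>G\<^esub> k) = x then u g * v h * w k else 0)"
proof -
  let ?U = "supp u" and ?V = "supp v" and ?W = "supp w"
  let ?Q = "(\<lambda>p. fst p \<otimes>\<^bsub>G\<^esub> snd p) ` (?V \<times> ?W)"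
  have fQ: "finite ?Q" using assms by auto
  have "conv G u (conv G v w) x = (\<Sum>g\<in>?U. \<Sum>q\<in>?Q. if g \<otimes>\<^bsub>G\<^esub> q = x then u g * conv G v w q else 0)"
    using assms fQ conv_supp[of G v w] by (intro conv_eq) auto
  also have "\<dots> = (\<Sum>g\<in>?U. \<Sum>q\<in>?Q. \<Sum>h\<in>?V. \<Sum>k\<in>?W.
      if h \<otimes>\<^bsub>G\<^esub> k = q \<and> g \<otimes>\<^bsub>G\<^esub> q = x then u g * v h * w k else 0)"
  proof (intro sum.cong refl)
    fix g q
    show "(if g \<otimes>\<^bsub>G\<^esub> q = x then u g * conv G v w q else 0) = (\<Sum>h\<in>?V. \<Sum>k\<in>?W.
      if h \<otimes>\<^bsub>G\<^esub> k = q \<and> g \<otimes>\<^bsub>G\<^esub> q = x then u g * v h * w k else 0)"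
      using assms by (cases "g \<otimes>\<^bsub>G\<^esub> q = x") (auto simp: conv_eq[of ?V ?W] sum_distrib_left mult_if0 mult.assoc intro!: sum.cong)
  qed
  also have "\<dots> = (\<Sum>g\<in>?U. \<Sum>h\<in>?V. \<Sum>k\<in>?W. \<Sum>q\<in>?Q.
      if h \<otimes>\<^bsub>G\<^esub> k = q \<and> g \<otimes>\<^bsub>G\<^esub> q = x then u g * v h * w k else 0)"
    by (rule reorder4b)
  also have "\<dots> = (\<Sum>g\<in>?U. \<Sum>h\<in>?V. \<Sum>k\<in>?W.
      if g \<otimes>\<^bsub>G\<^esub> (h \<otimes>\<^bsub>G\<^esub> k) = x then u g * v h * w k else 0)"
    using fQ by (intro sum.cong refl) (simp add: if_conj0 sum.delta' image_iff, force)
  finally show ?thesis .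
qed

lemma conv_assoc:
  fixes u v w :: "'g \<Rightarrow> 'k::field"
  assumes "monoid G" "u \<in> fsfun (carrier G)" "v \<in> fsfun (carrier G)" "w \<in> fsfun (carrier G)"
  shows "conv G (conv G u v) w = conv G u (conv G v w)"
proof
  fix x
  have f: "finite (supp u)" "finite (supp v)" "finite (supp w)"
    and c: "supp u \<subseteq> carrier G" "supp v \<subseteq> carrier G" "supp w \<subseteq> carrier G"
    using assms by (auto simp: fsfun_def)
  show "conv G (conv G u v) w x = conv G u (conv G v w) x"
    unfolding conv_conv_left[OF f] conv_conv_right[OF f]
    using c by (intro sum.cong refl) (auto simp: monoid.m_assoc[OF assms(1)] subset_eq)
qed


lemma conv_one_left:
  fixes f :: "'g \<Rightarrow> 'k::field"
  assumes "monoid G" "f \<in> fsfun (carrier G)"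
  shows "conv G (delta \<one>\<^bsub>G\<^esub>) f = f"
proof
  fix x
  have f: "finite (supp f)" "supp f \<subseteq> carrier G" using assms by (auto simp: fsfun_def)
  have "conv G (delta \<one>\<^bsub>G\<^esub>) f x = (\<Sum>g\<in>{\<one>\<^bsub>G\<^esub>}. \<Sum>h\<in>supp f. if g \<otimes>\<^bsub>G\<^esub> h = x then delta \<one>\<^bsub>G\<^esub> g * f h else 0)"
    using f by (intro conv_eq) (auto simp: supp_delta)
  also have "\<dots> = (\<Sum>h\<in>supp f. if \<one>\<^bsub>G\<^esub> \<otimes>\<^bsub>G\<^esub> h = x then delta \<one>\<^bsub>G\<^esub> \<one>\<^bsub>G\<^esub> * f h else 0)"
    by simp
  also have "\<dots> = (\<Sum>h\<in>supp f. if h = x then f h else 0)"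
    using f by (intro sum.cong refl) (auto simp: delta_apply monoid.l_one[OF assms(1)] subset_eq)
  also have "\<dots> = f x" using f by (simp add: sum.delta supp_def)
  finally show "conv G (delta \<one>\<^bsub>G\<^esub>) f x = f x" .
qed

lemma conv_one_right:
  fixes f :: "'g \<Rightarrow> 'k::field"
  assumes "monoid G" "f \<in> fsfun (carrier G)"
  shows "conv G f (delta \<one>\<^bsub>G\<^esub>) = f"
proof
  fix x
  have f: "finite (supp f)" "supp f \<subseteq> carrier G" using assms by (auto simp: fsfun_def)
  have "conv G f (delta \<one>\<^bsub>G\<^esub>) x = (\<Sum>g\<in>supp f. \<Sum>h\<in>{\<one>\<^bsub>G\<^esub>}. if g \<otimes>\<^bsub>G\<^esub> h = x then f g * delta \<one>\<^bsub>G\<^esub> h else 0)"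
    using f by (intro conv_eq) (auto simp: supp_delta)
  also have "\<dots> = (\<Sum>h\<in>supp f. if h \<otimes>\<^bsub>G\<^esub> \<one>\<^bsub>G\<^esub> = x then f h * delta \<one>\<^bsub>G\<^esub> \<one>\<^bsub>G\<^esub> else 0)"
    by simp
  also have "\<dots> = (\<Sum>h\<in>supp f. if h = x then f h else 0)"
    using f by (intro sum.cong refl) (auto simp: delta_apply monoid.r_one[OF assms(1)] subset_eq)
  also have "\<dots> = f x" using f by (simp add: sum.delta supp_def)
  finally show "conv G f (delta \<one>\<^bsub>G\<^esub>) x = f x" .
qed

lemma aug_conv:
  fixes u v :: "'g \<Rightarrow> 'k::field"
  assumes "finite (supp u)" "finite (supp v)"
  shows "augmentation (conv G u v) = augmentation u * augmentation v"
proof -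
  let ?U = "supp u" and ?V = "supp v"
  let ?P = "(\<lambda>p. fst p \<otimes>\<^bsub>G\<^esub> snd p) ` (?U \<times> ?V)"
  have fP: "finite ?P" using assms by auto
  have "augmentation (conv G u v) = (\<Sum>x\<in>?P. conv G u v x)"
    using fP conv_supp[of G u v] by (rule aug_eq)
  also have "\<dots> = (\<Sum>x\<in>?P. \<Sum>g\<in>?U. \<Sum>h\<in>?V. if g \<otimes>\<^bsub>G\<^esub> h = x then u g * v h else 0)"
    using assms by (intro sum.cong refl conv_eq) auto
  also have "\<dots> = (\<Sum>g\<in>?U. \<Sum>h\<in>?V. \<Sum>x\<in>?P. if g \<otimes>\<^bsub>G\<^esub> h = x then u g * v h else 0)"
  proof -
    have "(\<Sum>x\<in>?P. \<Sum>g\<in>?U. \<Sum>h\<in>?V. if g \<otimes>\<^bsub>G\<^esub> h = x then u g * v h else 0)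
      = (\<Sum>g\<in>?U. \<Sum>x\<in>?P. \<Sum>h\<in>?V. if g \<otimes>\<^bsub>G\<^esub> h = x then u g * v h else 0)" by (rule sum.swap)
    also have "\<dots> = (\<Sum>g\<in>?U. \<Sum>h\<in>?V. \<Sum>x\<in>?P. if g \<otimes>\<^bsub>G\<^esub> h = x then u g * v h else 0)"
      by (rule sum.cong[OF refl], rule sum.swap)
    finally show ?thesis .
  qed
  also have "\<dots> = (\<Sum>g\<in>?U. \<Sum>h\<in>?V. u g * v h)"
    using fP by (intro sum.cong refl) (simp add: sum.delta' image_iff, force)
  also have "\<dots> = augmentation u * augmentation v"
    by (simp add: augmentation_def sum_product)
  finally show ?thesis .
qed

lemma aug_ideal_subsp: "subsp (aug_ideal G :: ('g \<Rightarrow> 'k::field) set)"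
proof -
  have F: "subsp (fsfun (carrier G) :: ('g \<Rightarrow> 'k) set)" by (rule fsfun_subsp)
  have z: "augmentation (\<lambda>_. 0::'k) = 0" by (simp add: augmentation_def supp_def)
  have a: "augmentation (\<lambda>x. f x + g x) = augmentation f + augmentation g"
    if "finite (supp f)" "finite (supp g)" for f g :: "'g \<Rightarrow> 'k"
  proof -
    have "augmentation (\<lambda>x. f x + g x) = (\<Sum>x\<in>supp f \<union> supp g. f x + g x)"
      using that supp_add[of f g] by (intro aug_eq) auto
    also have "\<dots> = augmentation f + augmentation g"
      using that by (simp add: sum.distrib aug_eq[of "supp f \<union> supp g"])
    finally show ?thesis .
  qed
  have m: "augmentation (\<lambda>x. c * f x) = c * augmentation f" if "finite (supp f)" for f :: "'g \<Rightarrow> 'k" and c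
  proof -
    have "augmentation (\<lambda>x. c * f x) = (\<Sum>x\<in>supp f. c * f x)"
      using that supp_smult[of c f] by (intro aug_eq) auto
    then show ?thesis by (simp add: augmentation_def sum_distrib_left)
  qed
  show ?thesis unfolding subsp_def aug_ideal_def
    using F z a m unfolding subsp_def by (auto simp: fsfun_def)
qed

lemma aug_ideal_fs: "aug_ideal G \<subseteq> fsfun (carrier G)"
  unfolding aug_ideal_def by auto

lemma conv_ideal_left: assumes "monoid G" "u \<in> aug_ideal G" "v \<in> fsfun (carrier G)"
  shows "conv G u v \<in> aug_ideal G"
  using assms conv_fsfun[OF assms(1)] aug_conv[of u v G]
  unfolding aug_ideal_def fsfun_def by auto

lemma conv_ideal_right: assumes "monoid G" "u \<in> fsfun (carrier G)" "v \<in> aug_ideal G"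
  shows "conv G u v \<in> aug_ideal G"
  using assms conv_fsfun[OF assms(1)] aug_conv[of u v G]
  unfolding aug_ideal_def fsfun_def by auto

lemma phi_add:
  fixes f g :: "'a \<Rightarrow> 'k::field"
  assumes "finite (supp f)" "finite (supp g)"
  shows "phi_map s t (\<lambda>x. f x + g x) = (\<lambda>x. phi_map s t f x + phi_map s t g x)"
proof
  fix x
  let ?B = "supp f \<union> supp g"
  have "phi_map s t (\<lambda>x. f x + g x) x = (\<Sum>a\<in>?B. (f a + g a) * (delta (t a) x - delta (s a) x))"
    using assms supp_add[of f g] by (intro phi_eq) auto
  also have "\<dots> = phi_map s t f x + phi_map s t g x"
    using assms by (simp add: phi_eq[of ?B] distrib_right sum.distrib)
  finally show "phi_map s t (\<lambda>x. f x + g x) x = phi_map s t f x + phi_map s t g x" .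
qed

lemma phi_smult:
  fixes f :: "'a \<Rightarrow> 'k::field"
  assumes "finite (supp f)"
  shows "phi_map s t (\<lambda>x. c * f x) = (\<lambda>x. c * phi_map s t f x)"
proof
  fix x
  have "phi_map s t (\<lambda>x. c * f x) x = (\<Sum>a\<in>supp f. (c * f a) * (delta (t a) x - delta (s a) x))"
    using assms supp_smult[of c f] by (intro phi_eq) auto
  also have "\<dots> = c * phi_map s t f x"
    using assms by (simp add: phi_eq[of "supp f"] sum_distrib_left mult.assoc)
  finally show "phi_map s t (\<lambda>x. c * f x) x = c * phi_map s t f x" .
qed

lemma phi_zero: "phi_map s t (\<lambda>_. 0::'k::field) = (\<lambda>_. 0)"
  by (simp add: phi_map_def supp_def)

lemma phi_delta: "phi_map s t (delta a :: 'a \<Rightarrow> 'k::field) = (\<lambda>x. delta (t a) x - delta (s a) x)"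
proof
  fix x show "phi_map s t (delta a :: 'a \<Rightarrow> 'k::field) x = delta (t a) x - delta (s a) x"
  proof -
    have "supp (delta a :: 'a \<Rightarrow> 'k) \<subseteq> {a}" by (simp add: supp_delta)
    from phi_eq[OF _ this, of s t x] show ?thesis by (simp add: delta_apply)
  qed
qed


lemma bimod_supp: "supp (bimod_act l r v1 a v2) \<subseteq> (\<lambda>p. l (fst p) (r a (snd p))) ` (supp v1 \<times> supp v2)"
proof
  fix x assume "x \<in> supp (bimod_act l r v1 a v2)"
  then have "bimod_act l r v1 a v2 x \<noteq> 0" by (simp add: supp_def)
  then obtain p where "p \<in> supp v1 \<times> supp v2" "l (fst p) (r a (snd p)) = x"
    unfolding bimod_act_def by (smt (verit) sum.neutral)
  then show "x \<in> (\<lambda>p. l (fst p) (r a (snd p))) ` (supp v1 \<times> supp v2)" by force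
qed

lemma phi_bimod_sum:
  fixes v1 v2 :: "'g \<Rightarrow> 'k::field"
  assumes "finite (supp v1)" "finite (supp v2)"
  shows "phi_map s t (bimod_act l r v1 a v2) x = (\<Sum>g\<in>supp v1. \<Sum>h\<in>supp v2.
     v1 g * v2 h * (delta (t (l g (r a h))) x - delta (s (l g (r a h))) x))"
proof -
  let ?U = "supp v1" and ?V = "supp v2"
  let ?B = "(\<lambda>p. l (fst p) (r a (snd p))) ` (?U \<times> ?V)"
  let ?D = "\<lambda>b. delta (t b) x - delta (s b) x"
  have fB: "finite ?B" using assms by auto
  have "phi_map s t (bimod_act l r v1 a v2) x = (\<Sum>b\<in>?B. bimod_act l r v1 a v2 b * ?D b)"
    using fB bimod_supp[of l r v1 a v2] by (intro phi_eq) auto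
  also have "\<dots> = (\<Sum>b\<in>?B. \<Sum>g\<in>?U. \<Sum>h\<in>?V. if l g (r a h) = b then v1 g * v2 h * ?D b else 0)"
    using assms by (intro sum.cong refl) (simp add: bimod_eq[of ?U ?V] sum_distrib_right if_mult0)
  also have "\<dots> = (\<Sum>g\<in>?U. \<Sum>h\<in>?V. \<Sum>b\<in>?B. if l g (r a h) = b then v1 g * v2 h * ?D b else 0)"
  proof -
    have "(\<Sum>b\<in>?B. \<Sum>g\<in>?U. \<Sum>h\<in>?V. if l g (r a h) = b then v1 g * v2 h * ?D b else 0)
      = (\<Sum>g\<in>?U. \<Sum>b\<in>?B. \<Sum>h\<in>?V. if l g (r a h) = b then v1 g * v2 h * ?D b else 0)" by (rule sum.swap)
    also have "\<dots> = (\<Sum>g\<in>?U. \<Sum>h\<in>?V. \<Sum>b\<in>?B. if l g (r a h) = b then v1 g * v2 h * ?D b else 0)"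
      by (rule sum.cong[OF refl], rule sum.swap)
    finally show ?thesis .
  qed
  also have "\<dots> = (\<Sum>g\<in>?U. \<Sum>h\<in>?V. v1 g * v2 h * ?D (l g (r a h)))"
    using fB by (intro sum.cong refl) (simp add: sum.delta' image_iff, force)
  finally show ?thesis .
qed

lemma conv_conv_delta:
  fixes u w :: "'g \<Rightarrow> 'k::field"
  assumes "finite (supp u)" "finite (supp w)"
  shows "conv G (conv G u (delta q)) w x = (\<Sum>g\<in>supp u. \<Sum>k\<in>supp w.
     if (g \<otimes>\<^bsub>G\<^esub> q) \<otimes>\<^bsub>G\<^esub> k = x then u g * w k else 0)"
proof -
  have "conv G (conv G u (delta q)) w x = (\<Sum>g\<in>supp u. \<Sum>k\<in>supp w.
      if (g \<otimes>\<^bsub>G\<^esub> q) \<otimes>\<^bsub>G\<^esub> k = x then u g * delta q q * w k else 0)"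
  proof -
    have sd: "supp (delta q :: 'g \<Rightarrow> 'k) = {q}" by (rule supp_delta)
    show ?thesis using conv_conv_left[OF assms(1) _ assms(2), of "delta q" G x] unfolding sd by simp
  qed
  also have "\<dots> = (\<Sum>g\<in>supp u. \<Sum>k\<in>supp w.
     if (g \<otimes>\<^bsub>G\<^esub> q) \<otimes>\<^bsub>G\<^esub> k = x then u g * w k else 0)"
    by (intro sum.cong refl) (simp add: delta_apply)
  finally show ?thesis .
qed

lemma phi_bimod:
  fixes v1 v2 :: "'g \<Rightarrow> 'k::field"
  assumes gl: "group_like_graph G A s t l r" and a: "a \<in> A"
    and v: "v1 \<in> fsfun (carrier G)" "v2 \<in> fsfun (carrier G)"
  shows "phi_map s t (bimod_act l r v1 a v2)
     = conv G (conv G v1 (\<lambda>x. delta (t a) x - delta (s a) x)) v2"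
proof
  fix x
  have f: "finite (supp v1)" "finite (supp v2)" and c: "supp v1 \<subseteq> carrier G" "supp v2 \<subseteq> carrier G"
    using v by (auto simp: fsfun_def)
  have eq: "s (l g (r a h)) = g \<otimes>\<^bsub>G\<^esub> s a \<otimes>\<^bsub>G\<^esub> h" "t (l g (r a h)) = g \<otimes>\<^bsub>G\<^esub> t a \<otimes>\<^bsub>G\<^esub> h"
    if "g \<in> carrier G" "h \<in> carrier G" for g h
    using gl a that unfolding group_like_graph_def by blast+
  have fd: "finite (supp (delta q :: 'g \<Rightarrow> 'k))" for q by (simp add: supp_delta)
  have dd: "(\<lambda>x. delta (t a) x - delta (s a) x) = (\<lambda>x. delta (t a) x + (-1) * (delta (s a) x :: 'k))"
    by simp
  have fm: "finite (supp (\<lambda>x. (-1) * (delta (s a) x :: 'k)))"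
    using supp_smult[of "-1" "delta (s a) :: 'g \<Rightarrow> 'k"] fd finite_subset by blast
  have fc: "finite (supp (conv G v1 (delta q)))" for q
    using conv_supp[of G v1 "delta q"] f fd[of q] by (auto intro: finite_subset)
  have "conv G (conv G v1 (\<lambda>x. delta (t a) x - delta (s a) x)) v2
     = conv G (\<lambda>y. conv G v1 (delta (t a)) y + (-1) * conv G v1 (delta (s a)) y) v2"
    unfolding dd conv_add_right[OF f(1) fd fm] conv_smult_right[OF f(1) fd] by simp
  also have "\<dots> = (\<lambda>y. conv G (conv G v1 (delta (t a))) v2 y + (-1) * conv G (conv G v1 (delta (s a))) v2 y)"
  proof -
    have fm2: "finite (supp (\<lambda>y. (-1) * conv G v1 (delta (s a)) y))"
      using supp_smult[of "-1" "conv G v1 (delta (s a))"] fc finite_subset by blast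
    show ?thesis unfolding conv_add_left[OF fc fm2 f(2)] conv_smult_left[OF fc f(2)] by simp
  qed
  finally have R: "conv G (conv G v1 (\<lambda>x. delta (t a) x - delta (s a) x)) v2 x
     = conv G (conv G v1 (delta (t a))) v2 x - conv G (conv G v1 (delta (s a))) v2 x" by simp
  show "phi_map s t (bimod_act l r v1 a v2) x = conv G (conv G v1 (\<lambda>x. delta (t a) x - delta (s a) x)) v2 x"
    unfolding R phi_bimod_sum[OF f] conv_conv_delta[OF f] sum_subtractf[symmetric]
    using c by (intro sum.cong refl) (auto simp: eq subset_eq delta_apply)
qed


lemma conv_zero_left: "conv G (\<lambda>_. 0) v = (\<lambda>_. 0::'k::field)"
  by (rule ext) (simp add: conv_def supp_def)
lemma conv_zero_right: "conv G u (\<lambda>_. 0) = (\<lambda>_. 0::'k::field)"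
  by (rule ext) (simp add: conv_def supp_def)

lemma fs_finite: "f \<in> fsfun X \<Longrightarrow> finite (supp f)" by (simp add: fsfun_def)

lemma aug_pow_props: "(aug_pow G n :: ('g \<Rightarrow> 'k::field) set) \<subseteq> fsfun (carrier G) \<and> subsp (aug_pow G n :: ('g \<Rightarrow> 'k) set)"
  if "monoid G"
proof (induction n)
  case 0 then show ?case using fsfun_subsp by auto
next
  case (Suc n)
  have "kspan {conv G u v | u v. u \<in> aug_ideal G \<and> v \<in> aug_pow G n} \<subseteq> (fsfun (carrier G) :: ('g \<Rightarrow> 'k) set)"
  proof (rule kspan_least[OF fsfun_subsp], rule subsetI)
    fix f :: "'g \<Rightarrow> 'k" assume "f \<in> {conv G u v | u v. u \<in> aug_ideal G \<and> v \<in> aug_pow G n}"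
    then obtain u v where "f = conv G u v" "u \<in> aug_ideal G" "v \<in> aug_pow G n" by blast
    moreover have "u \<in> fsfun (carrier G)" using \<open>u \<in> aug_ideal G\<close> aug_ideal_fs by blast
    moreover have "v \<in> fsfun (carrier G)" using \<open>v \<in> aug_pow G n\<close> Suc.IH by blast
    ultimately show "f \<in> fsfun (carrier G)" using conv_fsfun[OF that] by simp
  qed
  then show ?case using kspan_subsp by (simp only: aug_pow.simps) blast
qed



lemma left_ideal:
  fixes u w :: "'g \<Rightarrow> 'k::field"
  assumes G: "monoid G"
  shows "u \<in> fsfun (carrier G) \<Longrightarrow> w \<in> aug_pow G m \<Longrightarrow> conv G u w \<in> aug_pow G m"
proof (induction m arbitrary: u w)
  case 0 then show ?case using conv_fsfun[OF G] by simp
next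
  case (Suc m)
  let ?S = "{conv G x y | x y. x \<in> aug_ideal G \<and> (y :: 'g \<Rightarrow> 'k) \<in> aug_pow G m}"
  let ?Q = "\<lambda>w. w \<in> fsfun (carrier G) \<and> conv G u w \<in> aug_pow G (Suc m)"
  have KS: "subsp (aug_pow G (Suc m) :: ('g \<Rightarrow> 'k) set)" "aug_pow G (Suc m) \<subseteq> (fsfun (carrier G) :: ('g \<Rightarrow> 'k) set)"
    using aug_pow_props[OF G, of "Suc m"] by auto
  have Km: "aug_pow G m \<subseteq> (fsfun (carrier G) :: ('g \<Rightarrow> 'k) set)" using aug_pow_props[OF G] by auto
  have u: "finite (supp u)" using Suc.prems fs_finite by blast
  have ws: "w \<in> kspan ?S" using Suc.prems by simp
  have z: "?Q (\<lambda>_. 0)"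
  proof -
    have "(\<lambda>_. 0::'k) \<in> fsfun (carrier G)" by (rule subsp_zero[OF fsfun_subsp])
    moreover have "(\<lambda>_. 0::'k) \<in> aug_pow G (Suc m)" by (rule subsp_zero[OF KS(1)])
    ultimately show ?thesis by (simp add: conv_zero_right)
  qed
  have b: "?Q w" if "w \<in> ?S" for w
  proof -
    from that obtain x y where xy: "w = conv G x y" "x \<in> aug_ideal G" "y \<in> aug_pow G m" by blast
    have x: "x \<in> fsfun (carrier G)" using xy aug_ideal_fs by blast
    have y: "y \<in> fsfun (carrier G)" using xy Km by blast
    have "conv G u w = conv G (conv G u x) y" using conv_assoc[OF G Suc.prems(1) x y] xy by simp
    moreover have "conv G u x \<in> aug_ideal G" using conv_ideal_right[OF G Suc.prems(1) xy(2)] .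
    ultimately have "conv G u w \<in> ?S" using xy by blast
    then have "conv G u w \<in> aug_pow G (Suc m)" using kspan_base[of ?S] by (simp only: aug_pow.simps) blast
    then show ?thesis using xy(1) conv_fsfun[OF G x y] by simp
  qed
  have a: "?Q (\<lambda>x. f x + g x)" if "?Q f" "?Q g" for f g
  proof -
    from that have f: "f \<in> fsfun (carrier G)" "g \<in> fsfun (carrier G)"
      and c: "conv G u f \<in> aug_pow G (Suc m)" "conv G u g \<in> aug_pow G (Suc m)" by auto
    have e: "conv G u (\<lambda>x. f x + g x) = (\<lambda>x. conv G u f x + conv G u g x)"
      by (rule conv_add_right[OF u fs_finite[OF f(1)] fs_finite[OF f(2)]])
    show ?thesis unfolding e using subsp_add[OF KS(1) c] subsp_add[OF fsfun_subsp f] by blast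
  qed
  have m: "?Q (\<lambda>x. c * f x)" if "?Q f" for c f
  proof -
    from that have f: "f \<in> fsfun (carrier G)" and c: "conv G u f \<in> aug_pow G (Suc m)" by auto
    have e: "conv G u (\<lambda>x. c * f x) = (\<lambda>x. c * conv G u f x)"
      by (rule conv_smult_right[OF u fs_finite[OF f(1)]])
    show ?thesis unfolding e using subsp_smult[OF KS(1) c] subsp_smult[OF fsfun_subsp f] by blast
  qed
  have "?Q w" by (rule kspan_induct[of w ?S ?Q, OF ws z b a m])
  then show ?case by blast
qed


lemma prod_pow:
  fixes u w :: "'g \<Rightarrow> 'k::field"
  assumes G: "monoid G" and wK: "w \<in> aug_pow G m"
  shows "u \<in> aug_pow G j \<Longrightarrow> conv G u w \<in> aug_pow G (j + m)"
proof (induction j arbitrary: u)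
  case 0 then show ?case using left_ideal[OF G _ wK] by simp
next
  case (Suc j)
  let ?S = "{conv G x y | x y. x \<in> aug_ideal G \<and> (y :: 'g \<Rightarrow> 'k) \<in> aug_pow G j}"
  let ?T = "{conv G x y | x y. x \<in> aug_ideal G \<and> (y :: 'g \<Rightarrow> 'k) \<in> aug_pow G (j + m)}"
  let ?Q = "\<lambda>u. u \<in> fsfun (carrier G) \<and> conv G u w \<in> aug_pow G (Suc (j + m))"
  have KS: "subsp (aug_pow G (Suc (j + m)) :: ('g \<Rightarrow> 'k) set)"
    using aug_pow_props[OF G, of "Suc (j + m)"] by (rule conjunct2)
  have Kj: "aug_pow G j \<subseteq> (fsfun (carrier G) :: ('g \<Rightarrow> 'k) set)" using aug_pow_props[OF G] by auto
  have w: "w \<in> fsfun (carrier G)" using aug_pow_props[OF G, of m] wK by auto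
  have wf: "finite (supp w)" using w fs_finite by blast
  have us: "u \<in> kspan ?S" using Suc.prems by simp
  have z: "?Q (\<lambda>_. 0)"
  proof -
    have "(\<lambda>_. 0::'k) \<in> fsfun (carrier G)" by (rule subsp_zero[OF fsfun_subsp])
    moreover have "(\<lambda>_. 0::'k) \<in> aug_pow G (Suc (j + m))" by (rule subsp_zero[OF KS(1)])
    ultimately show ?thesis by (simp add: conv_zero_left)
  qed
  have b: "?Q u" if "u \<in> ?S" for u
  proof -
    from that obtain x y where xy: "u = conv G x y" "x \<in> aug_ideal G" "y \<in> aug_pow G j" by blast
    have x: "x \<in> fsfun (carrier G)" using xy aug_ideal_fs by blast
    have y: "y \<in> fsfun (carrier G)" using xy Kj by blast
    have "conv G u w = conv G x (conv G y w)" using conv_assoc[OF G x y w] xy by simp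
    moreover have "conv G y w \<in> aug_pow G (j + m)" using Suc.IH[OF xy(3)] .
    ultimately have "conv G u w \<in> ?T" using xy by blast
    then have "conv G u w \<in> aug_pow G (Suc (j + m))" using kspan_base[of ?T] by (simp only: aug_pow.simps) blast
    then show ?thesis using xy(1) conv_fsfun[OF G x y] by simp
  qed
  have a: "?Q (\<lambda>x. f x + g x)" if "?Q f" "?Q g" for f g
  proof -
    from that have f: "f \<in> fsfun (carrier G)" "g \<in> fsfun (carrier G)"
      and c: "conv G f w \<in> aug_pow G (Suc (j + m))" "conv G g w \<in> aug_pow G (Suc (j + m))" by auto
    have e: "conv G (\<lambda>x. f x + g x) w = (\<lambda>x. conv G f w x + conv G g w x)"
      by (rule conv_add_left[OF fs_finite[OF f(1)] fs_finite[OF f(2)] wf])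
    show ?thesis unfolding e using subsp_add[OF KS(1) c] subsp_add[OF fsfun_subsp f] by blast
  qed
  have m: "?Q (\<lambda>x. c * f x)" if "?Q f" for c f
  proof -
    from that have f: "f \<in> fsfun (carrier G)" and c: "conv G f w \<in> aug_pow G (Suc (j + m))" by auto
    have e: "conv G (\<lambda>x. c * f x) w = (\<lambda>x. c * conv G f w x)"
      by (rule conv_smult_left[OF fs_finite[OF f(1)] wf])
    show ?thesis unfolding e using subsp_smult[OF KS(1) c] subsp_smult[OF fsfun_subsp f] by blast
  qed
  have "?Q u" by (rule kspan_induct[of u ?S ?Q, OF us z b a m])
  then show ?case by (simp only: add_Suc)
qed

lemma ideal_in_pow1:
  fixes x :: "'g \<Rightarrow> 'k::field"
  assumes G: "monoid G" and x: "x \<in> aug_ideal G"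
  shows "x \<in> aug_pow G 1"
proof -
  have x': "x \<in> fsfun (carrier G)" using x aug_ideal_fs by blast
  have d: "(delta \<one>\<^bsub>G\<^esub> :: 'g \<Rightarrow> 'k) \<in> aug_pow G 0" using delta_fsfun[of "\<one>\<^bsub>G\<^esub>" "carrier G"] G
    by (simp add: monoid.one_closed)
  have e: "conv G x (delta \<one>\<^bsub>G\<^esub>) = x" using conv_one_right[OF G x'] .
  have "conv G x (delta \<one>\<^bsub>G\<^esub>) \<in> {conv G u v | u v. u \<in> aug_ideal G \<and> (v :: 'g \<Rightarrow> 'k) \<in> aug_pow G 0}"
    using x d by blast
  then have "x \<in> {conv G u v | u v. u \<in> aug_ideal G \<and> (v :: 'g \<Rightarrow> 'k) \<in> aug_pow G 0}"
    by (simp only: e)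
  then have "x \<in> kspan {conv G u v | u v. u \<in> aug_ideal G \<and> (v :: 'g \<Rightarrow> 'k) \<in> aug_pow G 0}"
    by (rule subsetD[OF kspan_base])
  then show ?thesis by (simp only: One_nat_def aug_pow.simps(2))
qed

lemma d_ideal:
  assumes "p \<in> carrier G" "q \<in> carrier G"
  shows "(\<lambda>x. delta p x - delta q x :: 'k::field) \<in> aug_ideal G"
proof -
  have sub: "supp (\<lambda>x. delta p x - delta q x :: 'k) \<subseteq> {p, q}" by (auto simp: supp_def delta_apply)
  have "augmentation (\<lambda>x. delta p x - delta q x :: 'k) = (\<Sum>x\<in>{p, q}. delta p x - delta q x)"
    using sub by (intro aug_eq) auto
  also have "\<dots> = 0" by (cases "p = q") (simp_all add: delta_apply)
  finally show ?thesis unfolding aug_ideal_def fsfun_def using sub assms by (auto intro: finite_subset)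
qed


lemma conn_span:
  assumes "(\<lambda>u v. \<exists>a\<in>A. (s a = u \<and> t a = v) \<or> (s a = v \<and> t a = u))\<^sup>*\<^sup>* x y"
  shows "(\<lambda>w. delta y w - delta x w :: 'k::field) \<in> kspan {\<lambda>w. delta (t a) w - delta (s a) w | a. a \<in> A}"
  using assms
proof (induction rule: rtranclp_induct)
  case base
  have e: "(\<lambda>w. delta x w - delta x w :: 'k) = (\<lambda>_. 0)" by simp
  show ?case unfolding e by (rule subsp_zero[OF kspan_subsp])
next
  case (step y z)
  let ?D = "{\<lambda>w. delta (t a) w - delta (s a) w :: 'k | a. a \<in> A}"
  from step(2) obtain a where a: "a \<in> A" "(s a = y \<and> t a = z) \<or> (s a = z \<and> t a = y)" by blast
  have "(\<lambda>w. delta (t a) w - delta (s a) w :: 'k) \<in> ?D" using a(1) by blast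
  then have da: "(\<lambda>w. delta (t a) w - delta (s a) w :: 'k) \<in> kspan ?D"
    by (rule subsetD[OF kspan_base])
  have "(\<lambda>w. delta z w - delta y w :: 'k) \<in> kspan ?D"
  proof (cases "s a = y \<and> t a = z")
    case True then show ?thesis using da by simp
  next
    case False
    then have st: "s a = z" "t a = y" using a(2) by auto
    have "(\<lambda>w. (-1) * (delta (t a) w - delta (s a) w) :: 'k) \<in> kspan ?D"
      by (rule subsp_smult[OF kspan_subsp da])
    moreover have "(\<lambda>w. (-1) * (delta (t a) w - delta (s a) w) :: 'k) = (\<lambda>w. delta z w - delta y w)"
      using st by (simp add: fun_eq_iff)
    ultimately show ?thesis by simp
  qed
  from subsp_add[OF kspan_subsp this step(3)]
  have "(\<lambda>w. delta z w - delta y w + (delta y w - delta x w) :: 'k) \<in> kspan ?D" .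
  moreover have "(\<lambda>w. delta z w - delta y w + (delta y w - delta x w) :: 'k) = (\<lambda>w. delta z w - delta x w)"
    by (simp add: fun_eq_iff)
  ultimately show ?case by simp
qed

lemma ideal_span:
  fixes x :: "'g \<Rightarrow> 'k::field"
  assumes G: "monoid G" and pc: "path_connected_graph (carrier G) A s t" and x: "x \<in> aug_ideal G"
  shows "x \<in> kspan {\<lambda>w. delta (t a) w - delta (s a) w | a. a \<in> A}"
proof -
  let ?D = "{\<lambda>w. delta (t a) w - delta (s a) w :: 'k | a. a \<in> A}"
  have xf: "finite (supp x)" "supp x \<subseteq> carrier G" and xa: "augmentation x = 0"
    using x by (auto simp: aug_ideal_def fsfun_def)
  have e: "x = (\<lambda>w. \<Sum>g\<in>supp x. x g * (delta g w - delta \<one>\<^bsub>G\<^esub> w))"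
  proof
    fix w
    have L: "(\<Sum>g\<in>supp x. x g * delta g w) = x w"
      using fun_cong[OF lincomb[OF xf(1) order_refl], of w] by simp
    have Z: "(\<Sum>g\<in>supp x. x g) = 0" using xa unfolding augmentation_def .
    have "(\<Sum>g\<in>supp x. x g * (delta g w - delta \<one>\<^bsub>G\<^esub> w))
       = (\<Sum>g\<in>supp x. x g * delta g w) - (\<Sum>g\<in>supp x. x g) * delta \<one>\<^bsub>G\<^esub> w"
      by (simp add: right_diff_distrib sum_subtractf sum_distrib_right)
    also have "\<dots> = x w" unfolding L Z by simp
    finally show "x w = (\<Sum>g\<in>supp x. x g * (delta g w - delta \<one>\<^bsub>G\<^esub> w))" by simp
  qed
  have "(\<lambda>w. delta g w - delta \<one>\<^bsub>G\<^esub> w :: 'k) \<in> kspan ?D" if "g \<in> supp x" for g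
  proof -
    have "g \<in> carrier G" "\<one>\<^bsub>G\<^esub> \<in> carrier G" using that xf G by (auto simp: monoid.one_closed)
    then have "(\<lambda>u v. \<exists>a\<in>A. (s a = u \<and> t a = v) \<or> (s a = v \<and> t a = u))\<^sup>*\<^sup>* \<one>\<^bsub>G\<^esub> g"
      using pc unfolding path_connected_graph_def by blast
    then show ?thesis by (rule conn_span)
  qed
  then have "(\<lambda>w. \<Sum>g\<in>supp x. x g * (delta g w - delta \<one>\<^bsub>G\<^esub> w)) \<in> kspan ?D"
    by (intro subsp_sum[OF kspan_subsp xf(1)]) blast
  then show ?thesis by (simp only: e[symmetric])
qed


lemma bimod_fsfun:
  fixes v1 v2 :: "'g \<Rightarrow> 'k::field"
  assumes gl: "group_like_graph G A s t l r" and a: "a \<in> A"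
    and v: "v1 \<in> fsfun (carrier G)" "v2 \<in> fsfun (carrier G)"
  shows "bimod_act l r v1 a v2 \<in> fsfun A"
proof -
  have f: "finite (supp v1)" "finite (supp v2)" and c: "supp v1 \<subseteq> carrier G" "supp v2 \<subseteq> carrier G"
    using v by (auto simp: fsfun_def)
  have cl: "l g (r a h) \<in> A" if "g \<in> carrier G" "h \<in> carrier G" for g h
  proof -
    have "r a h \<in> A" using gl a that(2) unfolding group_like_graph_def by blast
    then show ?thesis using gl that(1) unfolding group_like_graph_def by blast
  qed
  have "(\<lambda>p. l (fst p) (r a (snd p))) ` (supp v1 \<times> supp v2) \<subseteq> A"
    using c cl by (auto simp: subset_eq)
  moreover have "finite ((\<lambda>p. l (fst p) (r a (snd p))) ` (supp v1 \<times> supp v2))" using f by auto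
  ultimately show ?thesis using bimod_supp[of l r v1 a v2] unfolding fsfun_def
    by (auto intro: finite_subset)
qed

lemma main_sub:
  fixes G :: "('g, 'b) monoid_scheme" and A :: "'a set"
    and s t :: "'a \<Rightarrow> 'g" and l :: "'g \<Rightarrow> 'a \<Rightarrow> 'a" and r :: "'a \<Rightarrow> 'g \<Rightarrow> 'a"
  assumes gl: "group_like_graph G A s t l r"
  shows "(aug_pow_A G A l r n :: ('a \<Rightarrow> 'k::field) set) \<subseteq> {f \<in> fsfun A. phi_map s t f \<in> aug_pow G (Suc n)}"
proof -
  have G: "monoid G" using gl unfolding group_like_graph_def by (simp add: group.is_monoid)
  let ?W = "{f \<in> fsfun A. phi_map s t f \<in> (aug_pow G (Suc n) :: ('g \<Rightarrow> 'k) set)}"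
  have KS: "subsp (aug_pow G (Suc n) :: ('g \<Rightarrow> 'k) set)"
    using aug_pow_props[OF G, of "Suc n"] by (rule conjunct2)
  have W: "subsp ?W" unfolding subsp_def
  proof (intro conjI ballI allI)
    show "(\<lambda>_. 0) \<in> ?W" using subsp_zero[OF fsfun_subsp] subsp_zero[OF KS] by (simp add: phi_zero)
  next
    fix f g assume f: "f \<in> ?W" and g: "g \<in> ?W"
    have e: "phi_map s t (\<lambda>x. f x + g x) = (\<lambda>x. phi_map s t f x + phi_map s t g x)"
      using f g by (intro phi_add) (auto simp: fsfun_def)
    have "phi_map s t (\<lambda>x. f x + g x) \<in> aug_pow G (Suc n)" unfolding e
      using f g subsp_add[OF KS] by blast
    then show "(\<lambda>x. f x + g x) \<in> ?W"
      using f g subsp_add[OF fsfun_subsp] by blast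
  next
    fix c and f assume f: "f \<in> ?W"
    have e: "phi_map s t (\<lambda>x. c * f x) = (\<lambda>x. c * phi_map s t f x)"
      using f by (intro phi_smult) (auto simp: fsfun_def)
    have "phi_map s t (\<lambda>x. c * f x) \<in> aug_pow G (Suc n)" unfolding e
      using f subsp_smult[OF KS] by blast
    then show "(\<lambda>x. c * f x) \<in> ?W"
      using f subsp_smult[OF fsfun_subsp] by blast
  qed
  have gen: "b \<in> ?W" if "b \<in> {bimod_act l r v1 a v2 | v1 a v2 k.
       a \<in> A \<and> k \<le> n \<and> v1 \<in> aug_pow G k \<and> v2 \<in> aug_pow G (n - k)}" for b
  proof -
    from that obtain v1 a v2 k where b: "b = bimod_act l r v1 a v2" "a \<in> A" "k \<le> n"
      "v1 \<in> aug_pow G k" "v2 \<in> aug_pow G (n - k)" by blast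
    have v1: "v1 \<in> fsfun (carrier G)" using b(4) aug_pow_props[OF G, of k] by blast
    have v2: "v2 \<in> fsfun (carrier G)" using b(5) aug_pow_props[OF G, of "n - k"] by blast
    have st: "s a \<in> carrier G" "t a \<in> carrier G" using gl b(2) unfolding group_like_graph_def by auto
    have d1: "(\<lambda>x. delta (t a) x - delta (s a) x :: 'k) \<in> aug_pow G 1"
      by (rule ideal_in_pow1[OF G d_ideal[OF st(2) st(1)]])
    have c1: "conv G v1 (\<lambda>x. delta (t a) x - delta (s a) x) \<in> aug_pow G (k + 1)"
      by (rule prod_pow[OF G d1 b(4)])
    have c2: "conv G (conv G v1 (\<lambda>x. delta (t a) x - delta (s a) x)) v2 \<in> aug_pow G (k + 1 + (n - k))"
      by (rule prod_pow[OF G b(5) c1])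
    have nn: "k + 1 + (n - k) = Suc n" using b(3) by simp
    have "phi_map s t b \<in> aug_pow G (Suc n)"
      using c2 unfolding nn b(1) phi_bimod[OF gl b(2) v1 v2] .
    moreover have "b \<in> fsfun A" unfolding b(1) by (rule bimod_fsfun[OF gl b(2) v1 v2])
    ultimately show ?thesis by blast
  qed
  show ?thesis unfolding aug_pow_A_def
    by (rule kspan_least[OF W]) (use gen in blast)
qed


lemma main_sup:
  fixes G :: "('g, 'b) monoid_scheme" and A :: "'a set"
    and s t :: "'a \<Rightarrow> 'g" and l :: "'g \<Rightarrow> 'a \<Rightarrow> 'a" and r :: "'a \<Rightarrow> 'g \<Rightarrow> 'a"
  assumes gl: "group_like_graph G A s t l r"
    and pc: "path_connected_graph (carrier G) A s t"
  shows "aug_pow G (Suc n) \<subseteq> phi_map s t ` (aug_pow_A G A l r n :: ('a \<Rightarrow> 'k::field) set)"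
proof -
  have G: "monoid G" using gl unfolding group_like_graph_def by (simp add: group.is_monoid)
  let ?KA = "aug_pow_A G A l r n :: ('a \<Rightarrow> 'k) set"
  let ?V = "phi_map s t ` ?KA"
  have KAf: "?KA \<subseteq> fsfun A" using main_sub[OF gl, of n] by blast
  have KAs: "subsp ?KA" unfolding aug_pow_A_def by (rule kspan_subsp)
  have Kn: "aug_pow G n \<subseteq> (fsfun (carrier G) :: ('g \<Rightarrow> 'k) set)"
    using aug_pow_props[OF G, of n] by (rule conjunct1)
  have V: "subsp ?V" unfolding subsp_def
  proof (intro conjI ballI allI)
    have "phi_map s t (\<lambda>_. 0) \<in> ?V" using subsp_zero[OF KAs] by blast
    then show "(\<lambda>_. 0) \<in> ?V" by (simp add: phi_zero)
  next
    fix f g assume "f \<in> ?V" "g \<in> ?V"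
    then obtain z1 z2 where z: "z1 \<in> ?KA" "z2 \<in> ?KA" "f = phi_map s t z1" "g = phi_map s t z2" by blast
    have zf: "finite (supp z1)" "finite (supp z2)" using z KAf by (auto simp: fsfun_def)
    have "phi_map s t (\<lambda>x. z1 x + z2 x) \<in> ?V" using subsp_add[OF KAs z(1,2)] by blast
    then show "(\<lambda>x. f x + g x) \<in> ?V" unfolding z(3,4) phi_add[OF zf] .
  next
    fix c and f assume "f \<in> ?V"
    then obtain z1 where z: "z1 \<in> ?KA" "f = phi_map s t z1" by blast
    have zf: "finite (supp z1)" using z KAf by (auto simp: fsfun_def)
    have "phi_map s t (\<lambda>x. c * z1 x) \<in> ?V" using subsp_smult[OF KAs z(1)] by blast
    then show "(\<lambda>x. c * f x) \<in> ?V" unfolding z(2) phi_smult[OF zf] .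
  qed
  have gen: "conv G x y \<in> ?V" if x: "x \<in> aug_ideal G" and y: "y \<in> aug_pow G n" for x y
  proof -
    let ?D = "{\<lambda>w. delta (t a) w - delta (s a) w :: 'k | a. a \<in> A}"
    let ?Q = "\<lambda>x. x \<in> fsfun (carrier G) \<and> conv G x y \<in> ?V"
    have yF: "y \<in> fsfun (carrier G)" using y Kn by blast
    have yf: "finite (supp y)" using yF by (simp add: fsfun_def)
    have xs: "x \<in> kspan ?D" by (rule ideal_span[OF G pc x])
    have z: "?Q (\<lambda>_. 0)"
      using subsp_zero[OF fsfun_subsp] subsp_zero[OF V] by (simp add: conv_zero_left)
    have b: "?Q d" if "d \<in> ?D" for d
    proof -
      from that obtain a where a: "a \<in> A" "d = (\<lambda>w. delta (t a) w - delta (s a) w)" by blast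
      have st: "s a \<in> carrier G" "t a \<in> carrier G" using gl a(1) unfolding group_like_graph_def by auto
      have dF: "d \<in> fsfun (carrier G)" using a(2) d_ideal[OF st(2) st(1)] aug_ideal_fs by blast
      have one: "(delta \<one>\<^bsub>G\<^esub> :: 'g \<Rightarrow> 'k) \<in> fsfun (carrier G)"
        by (rule delta_fsfun) (simp add: monoid.one_closed[OF G])
      have "bimod_act l r (delta \<one>\<^bsub>G\<^esub>) a y \<in> {bimod_act l r v1 a v2 | v1 a v2 k.
          a \<in> A \<and> k \<le> n \<and> (v1 :: 'g \<Rightarrow> 'k) \<in> aug_pow G k \<and> v2 \<in> aug_pow G (n - k)}"
        using a(1) one y by fastforce
      then have bm: "bimod_act l r (delta \<one>\<^bsub>G\<^esub>) a y \<in> ?KA"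
        unfolding aug_pow_A_def by (rule subsetD[OF kspan_base])
      have "phi_map s t (bimod_act l r (delta \<one>\<^bsub>G\<^esub>) a y) = conv G (conv G (delta \<one>\<^bsub>G\<^esub>) d) y"
        unfolding a(2) by (rule phi_bimod[OF gl a(1) one yF])
      also have "\<dots> = conv G d y" by (simp only: conv_one_left[OF G dF])
      finally have "conv G d y \<in> ?V" using bm by (metis image_eqI)
      then show ?thesis using dF by blast
    qed
    have ad: "?Q (\<lambda>x. f x + g x)" if "?Q f" "?Q g" for f g
    proof -
      from that have f: "f \<in> fsfun (carrier G)" "g \<in> fsfun (carrier G)"
        and c: "conv G f y \<in> ?V" "conv G g y \<in> ?V" by auto
      have e: "conv G (\<lambda>x. f x + g x) y = (\<lambda>x. conv G f y x + conv G g y x)"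
        by (rule conv_add_left[OF fs_finite[OF f(1)] fs_finite[OF f(2)] yf])
      show ?thesis unfolding e using subsp_add[OF V c] subsp_add[OF fsfun_subsp f] by blast
    qed
    have m: "?Q (\<lambda>x. c * f x)" if "?Q f" for c f
    proof -
      from that have f: "f \<in> fsfun (carrier G)" and c: "conv G f y \<in> ?V" by auto
      have e: "conv G (\<lambda>x. c * f x) y = (\<lambda>x. c * conv G f y x)"
        by (rule conv_smult_left[OF fs_finite[OF f(1)] yf])
      show ?thesis unfolding e using subsp_smult[OF V c] subsp_smult[OF fsfun_subsp f] by blast
    qed
    have "?Q x" by (rule kspan_induct[of x ?D ?Q, OF xs z b ad m])
    then show ?thesis by blast
  qed
  show ?thesis unfolding aug_pow.simps
    by (rule kspan_least[OF V]) (use gen in blast)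
qed


theorem mainTheorem9:
  fixes G :: "('g, 'b) monoid_scheme" and A :: "'a set"
    and s t :: "'a \<Rightarrow> 'g" and l :: "'g \<Rightarrow> 'a \<Rightarrow> 'a" and r :: "'a \<Rightarrow> 'g \<Rightarrow> 'a"
  assumes "group_like_graph G A s t l r"
    and "path_connected_graph (carrier G) A s t"
  shows "\<forall>n. phi_map s t ` (aug_pow_A G A l r n :: ('a \<Rightarrow> 'k::field_char_0) set)
             = aug_pow G (Suc n)"
proof
  fix n
  show "phi_map s t ` (aug_pow_A G A l r n :: ('a \<Rightarrow> 'k::field_char_0) set) = aug_pow G (Suc n)"
  proof
    show "phi_map s t ` (aug_pow_A G A l r n :: ('a \<Rightarrow> 'k) set) \<subseteq> aug_pow G (Suc n)"
      using main_sub[OF assms(1), of n] by blast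
    show "aug_pow G (Suc n) \<subseteq> phi_map s t ` (aug_pow_A G A l r n :: ('a \<Rightarrow> 'k) set)"
      by (rule main_sup[OF assms])
  qed
qed

end
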